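(* Let $H,K$ be complex Hilbert spaces with $\dim H=n$, $\dim K=m$, and let $r$ be an integer with $1\le r\le n\le m$. Then there is an $r$-tuple $(v_1,\dots,v_r)$ of operators $v_k\in\mathcal B(H,K)$ with $v_1^*v_1+\cdots+v_r^*v_r=\mathbf 1_H$ such that the family of $r^2$ operators $\{v_i^*v_j:1\le i,j\le r\}$ is linearly independent in $\mathcal B(H)$. *)

theory Defs
  imports "HOL-Analysis.Analysis"
begin

text \<open>Operators between finite-dimensional complex Hilbert spaces are represented by
  their matrices w.r.t. orthonormal bases; the Hilbert-space adjoint is the conjugate transpose.\<close>

definition adj :: "complex^'n^'m \<Rightarrow> complex^'m^'n" where
  "adj A = (\<chi> i j. cnj (A $ j $ i))"

definition cscale :: "complex \<Rightarrow> complex^'n^'m \<Rightarrow> complex^'n^'m" where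
  "cscale c A = (\<chi> i j. c * (A $ i $ j))"

definition lin_indep_family :: "'i set \<Rightarrow> ('i \<Rightarrow> complex^'n^'m) \<Rightarrow> bool" where
  "lin_indep_family I f \<longleftrightarrow>
     (\<forall>c. (\<Sum>p\<in>I. cscale (c p) (f p)) = 0 \<longrightarrow> (\<forall>p\<in>I. c p = 0))"

end

theory Submission
  imports Defs
begin

lemma prod_entry:
  fixes c d :: "'n::finite \<Rightarrow> 'm::finite option"
  shows "(adj ((\<chi> a p. if c p = Some a then 1 else 0) :: complex^'n^'m)
        ** ((\<chi> a p. if d p = Some a then 1 else 0) :: complex^'n^'m)) $ p $ q
       = (if c p = d q \<and> c p \<noteq> None then 1 else 0)"
proof -
  have "(adj ((\<chi> a p. if c p = Some a then 1 else 0) :: complex^'n^'m)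
        ** ((\<chi> a p. if d p = Some a then 1 else 0) :: complex^'n^'m)) $ p $ q
     = (\<Sum>a\<in>UNIV. if c p = Some a \<and> d q = Some a then 1 else 0)"
    by (auto simp: matrix_matrix_mult_def adj_def intro!: sum.cong)
  also have "\<dots> = (if c p = d q \<and> c p \<noteq> None then 1 else 0)"
  proof (cases "c p")
    case None then show ?thesis by simp
  next
    case (Some a0)
    have "(\<Sum>a\<in>UNIV. (if c p = Some a \<and> d q = Some a then 1 else 0 :: complex))
        = (\<Sum>a\<in>UNIV. if a = a0 then (if d q = Some a0 then 1 else 0) else 0)"
      using Some by (intro sum.cong) auto
    also have "\<dots> = (if d q = Some a0 then 1 else 0)" by simp
    finally show ?thesis using Some by auto
  qed
  finally show ?thesis .
qed

theorem lemma5p2: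
  fixes r :: nat
  assumes "1 \<le> r" and "r \<le> CARD('n::finite)" and "CARD('n) \<le> CARD('m::finite)"
  shows "\<exists>v :: nat \<Rightarrow> complex^'n^'m.
           (\<Sum>k=1..r. adj (v k) ** v k) = mat 1 \<and>
           lin_indep_family ({1..r} \<times> {1..r}) (\<lambda>(i, j). adj (v i) ** v j)"
proof -
  obtain idx :: "nat \<Rightarrow> 'n" where idx: "inj_on idx {1..r}"
    using card_le_inj[of "{1..r}" "UNIV :: 'n set"] assms by auto
  obtain g :: "'n \<Rightarrow> 'm" where g: "inj g"
    using card_le_inj[of "UNIV :: 'n set" "UNIV :: 'm set"] assms by auto
  define R where "R = idx ` {1..r}"
  define t where "t = g (idx 1)"
  define c :: "nat \<Rightarrow> 'n \<Rightarrow> 'm option" where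
    "c k p = (if p = idx k then Some t else if k = 1 \<and> p \<notin> R then Some (g p) else None)" for k p
  define v :: "nat \<Rightarrow> complex^'n^'m" where
    "v k = (\<chi> a p. if c k p = Some a then 1 else 0)" for k
  have M: "(adj (v i) ** v j) $ p $ q = (if c i p = c j q \<and> c i p \<noteq> None then 1 else 0)" for i j p q
    unfolding v_def by (rule prod_entry)
  have cR: "c k (idx i) = (if k = i then Some t else None)" if "i \<in> {1..r}" "k \<in> {1..r}" for i k
    using that idx unfolding c_def R_def by (auto dest: inj_onD)
  have 1: "(\<Sum>k=1..r. adj (v k) ** v k) = mat 1"
  proof (subst vec_eq_iff, intro allI, subst vec_eq_iff, intro allI)
    fix p q
    have "(\<Sum>k=1..r. adj (v k) ** v k) $ p $ q
       = (\<Sum>k=1..r. if c k p = c k q \<and> c k p \<noteq> None then 1 else 0)"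
      by (simp add: sum_component M)
    also have "\<dots> = (if p = q then 1 else 0)"
    proof (cases "p = q")
      case False
      have "\<not> (c k p = c k q \<and> c k p \<noteq> None)" for k
      proof
        assume a: "c k p = c k q \<and> c k p \<noteq> None"
        show False
        proof (cases "p = idx k")
          case True
          then have "q \<noteq> idx k" using False by simp
          then have "k = 1" "g q = t" using a True unfolding c_def by (auto split: if_splits)
          then have "q = idx k" using g unfolding t_def by (auto dest: injD)
          then show False using \<open>q \<noteq> idx k\<close> by simp
        next
          case pk: False
          then have k1: "k = 1" and cp: "c k p = Some (g p)" using a unfolding c_def by (auto split: if_splits)
          show False
          proof (cases "q = idx k")
            case True
            then have "g p = t" using a cp unfolding c_def by simp
            then have "p = idx k" using g k1 unfolding t_def by (auto dest: injD)
            then show False using pk by simp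
          next
            case qk: False
            then have "c k q = Some (g q) \<or> c k q = None" unfolding c_def by simp
            then have "g p = g q" using a cp by auto
            then show False using g False by (auto dest: injD)
          qed
        qed
      qed
      then have "(\<Sum>k=1..r. (if c k p = c k q \<and> c k p \<noteq> None then 1 else 0 :: complex)) = 0"
        by (intro sum.neutral) simp
      then show ?thesis using False by simp
    next
      case True
      show ?thesis
      proof (cases "p \<in> R")
        case True
        then obtain i where i: "i \<in> {1..r}" "p = idx i" unfolding R_def by auto
        have "(\<Sum>k=1..r. (if c k p = c k p \<and> c k p \<noteq> None then 1 else 0 :: complex))
            = (\<Sum>k=1..r. if k = i then 1 else 0)"
          using i cR by (intro sum.cong) auto
        also have "\<dots> = 1" using i by simp
        finally show ?thesis using \<open>p = q\<close> by simp
      next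
        case False
        have "p \<noteq> idx k" if "k \<in> {1..r}" for k using False that unfolding R_def by auto
        then have "(\<Sum>k=1..r. (if c k p = c k p \<and> c k p \<noteq> None then 1 else 0 :: complex))
            = (\<Sum>k=1..r. if k = 1 then 1 else 0)"
          using False unfolding c_def by (intro sum.cong) auto
        also have "\<dots> = 1" using assms(1) by simp
        finally show ?thesis using \<open>p = q\<close> by simp
      qed
    qed
    finally show "(\<Sum>k=1..r. adj (v k) ** v k) $ p $ q = mat 1 $ p $ q"
      by (simp add: mat_def)
  qed
  have 2: "lin_indep_family ({1..r} \<times> {1..r}) (\<lambda>(i, j). adj (v i) ** v j)"
    unfolding lin_indep_family_def
  proof (intro allI impI ballI)
    fix a :: "nat \<times> nat \<Rightarrow> complex" and pr
    assume h: "(\<Sum>p\<in>{1..r} \<times> {1..r}. cscale (a p) ((\<lambda>(i, j). adj (v i) ** v j) p)) = 0"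
      and pr: "pr \<in> {1..r} \<times> {1..r}"
    obtain i0 j0 where ij: "pr = (i0, j0)" "i0 \<in> {1..r}" "j0 \<in> {1..r}" using pr by auto
    have "0 = (\<Sum>p\<in>{1..r} \<times> {1..r}. cscale (a p) ((\<lambda>(i, j). adj (v i) ** v j) p)) $ idx i0 $ idx j0"
      using h by (simp only: h vec_lambda_beta zero_index)
    also have "\<dots> = (\<Sum>p\<in>{1..r} \<times> {1..r}. if p = pr then a pr else 0)"
      unfolding sum_component
    proof (intro sum.cong refl)
      fix p assume p: "p \<in> {1..r} \<times> {1..r}"
      then obtain i j where pij: "p = (i, j)" "i \<in> {1..r}" "j \<in> {1..r}" by auto
      show "cscale (a p) ((\<lambda>(i, j). adj (v i) ** v j) p) $ idx i0 $ idx j0 = (if p = pr then a pr else 0)"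
      proof -
        have e: "((\<lambda>(i, j). adj (v i) ** v j) p) $ idx i0 $ idx j0 = (if i = i0 \<and> j = j0 then 1 else 0)"
          using pij M[of i j "idx i0" "idx j0"] cR[OF ij(2) pij(2)] cR[OF ij(3) pij(3)] by simp
        show ?thesis unfolding cscale_def vec_lambda_beta e using pij ij by auto
      qed
    qed
    also have "\<dots> = a pr" using pr by simp
    finally show "a pr = 0" by simp
  qed
  show ?thesis using 1 2 by blast
qed

end
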